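(* Let $(E,\mathcal L)$ be a simple affine oriented matroid satisfying (S): $|S(X,Y)|<\infty$ for all $X,Y\in\mathcal L$. Let $\pi$ be a parallelism class with its total order $<_\pi$. Then $(\pi,<_\pi)$ or its reverse is order isomorphic to exactly one of: $(\mathbb Z,<)$ (if $\pi$ has neither a minimum nor a maximum), $(\mathbb N,<)$ (if exactly one extremum exists, the order being reversed if necessary so that it is a minimum), or $\{0,1,\dots,|\pi|-1\}$ (if both a minimum and a maximum exist; then $\pi$ is finite).
   Context: A sign vector on a set $E$ is an element of $\{+,-,0\}^E$; $-X$ is defined by $(-X)(e)=-X(e)$. The separator of $X,Y$ is $S(X,Y)=\{e\in E: X(e)\neq0\neq Y(e),\ X(e)\neq Y(e)\}$. The composition $X\circ Y$ is given by $(X\circ Y)(e)=X(e)$ if $X(e)\neq0$ and $Y(e)$ otherwise; $X\oplus Y$ is $0$ on $S(X,Y)$ and equals $X\circ Y$ elsewhere. For sets of sign vectors, $\mathcal A\circ\mathcal B=\{X\circ Y:X\in\mathcal A,Y\in\mathcal B\}$, $-\mathcal A=\{-X:X\in\mathcal A\}$. For $\mathcal L\subseteq\{+,-,0\}^E$ let $I_e(X,Y;\mathcal L)=\{Z\in\mathcal L:Z(e)=0,\ Z(f)=(X\circ Y)(f)\ \forall f\notin S(X,Y)\}$, $I(X,Y;\mathcal L)=\bigcup_{e\in S(X,Y)}I_e(X,Y;\mathcal L)$ and $\mathcal P(\mathcal L)=\{X\oplus(-Y):X,Y\in\mathcal L,\ I(X,-Y;\mathcal L)=I(-X,Y;\mathcal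 L)=\emptyset\}$. An affine oriented matroid (AOM) on an arbitrary set $E$ is a pair $(E,\mathcal L)$, $\mathcal L\subseteq\{+,-,0\}^E$, satisfying (FS) $\mathcal L\circ(-\mathcal L)\subseteq\mathcal L$; (SE) for all $X,Y\in\mathcal L$ and $e\in S(X,Y)$, $I_e(X,Y;\mathcal L)\ne\emptyset$; (P) $\mathcal P(\mathcal L)\circ\mathcal L\subseteq\mathcal L$. Elements $e,f\in E$ are equivalent if $X(e)=X(f)$ for all $X\in\mathcal L$, or $X(e)=-X(f)$ for all $X\in\mathcal L$; $e$ is redundant if $X(e)=Y(e)$ for all $X,Y\in\mathcal L$. The AOM is simple if it has no redundant elements and no two distinct equivalent elements. Two elements $e,f$ are parallel, $e\parallel f$, if there is no $X\in\mathcal L$ with $X(e)=X(f)=0$; in a simple AOM the reflexive closure of $\parallel$ is an equivalence relation whose classes are the parallelism classes. On a parallelism class $\pi$ the relation $[a,b,c]$ holds iff $a,b,c$ are pairwise distinct and for all $X,Z\in\mathcal L$, $X(a)=0$ and $Z(c)=0$ imply $X(b)=-Z(b)$; $<_\pi$ is the total order on $\pi$ (unique up to reversal) such that $[a,b,c]$ iff $a<_\pi b<_\pi c$ or $c<_\pi b<_\pi a$. *)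

theory Defs
  imports Main
begin

text \<open>Sign vectors on a ground set E; the ground set is modelled by the type 'e
  (E = UNIV), so a sign vector is a function 'e \<Rightarrow> sign.\<close>

datatype sign = Pos | Neg | Zero

fun sneg :: "sign \<Rightarrow> sign" where
  "sneg Pos = Neg" | "sneg Neg = Pos" | "sneg Zero = Zero"

type_synonym 'e svec = "'e \<Rightarrow> sign"

definition vneg :: "'e svec \<Rightarrow> 'e svec" where
  "vneg X = (\<lambda>e. sneg (X e))"

definition sep :: "'e svec \<Rightarrow> 'e svec \<Rightarrow> 'e set" where
  "sep X Y = {e. X e \<noteq> Zero \<and> Y e \<noteq> Zero \<and> X e \<noteq> Y e}"

definition comp :: "'e svec \<Rightarrow> 'e svec \<Rightarrow> 'e svec" where
  "comp X Y = (\<lambda>e. if X e \<noteq> Zero then X e else Y e)"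

definition oplus :: "'e svec \<Rightarrow> 'e svec \<Rightarrow> 'e svec" where
  "oplus X Y = (\<lambda>e. if e \<in> sep X Y then Zero else comp X Y e)"

definition I_e :: "'e svec \<Rightarrow> 'e svec \<Rightarrow> 'e svec set \<Rightarrow> 'e \<Rightarrow> 'e svec set" where
  "I_e X Y L e = {Z \<in> L. Z e = Zero \<and> (\<forall>f. f \<notin> sep X Y \<longrightarrow> Z f = comp X Y f)}"

definition I_all :: "'e svec \<Rightarrow> 'e svec \<Rightarrow> 'e svec set \<Rightarrow> 'e svec set" where
  "I_all X Y L = (\<Union>e\<in>sep X Y. I_e X Y L e)"

definition P_set :: "'e svec set \<Rightarrow> 'e svec set" where
  "P_set L = {oplus X (vneg Y) | X Y. X \<in> L \<and> Y \<in> L \<and>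
                 I_all X (vneg Y) L = {} \<and> I_all (vneg X) Y L = {}}"

definition AOM :: "'e svec set \<Rightarrow> bool" where
  "AOM L \<longleftrightarrow>
     (\<forall>X\<in>L. \<forall>Y\<in>L. comp X (vneg Y) \<in> L) \<and>
     (\<forall>X\<in>L. \<forall>Y\<in>L. \<forall>e\<in>sep X Y. I_e X Y L e \<noteq> {}) \<and>
     (\<forall>X\<in>P_set L. \<forall>Y\<in>L. comp X Y \<in> L)"

definition equivalent_elems :: "'e svec set \<Rightarrow> 'e \<Rightarrow> 'e \<Rightarrow> bool" where
  "equivalent_elems L e f \<longleftrightarrow>
     (\<forall>X\<in>L. X e = X f) \<or> (\<forall>X\<in>L. X e = sneg (X f))"

definition redundant :: "'e svec set \<Rightarrow> 'e \<Rightarrow> bool" where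
  "redundant L e \<longleftrightarrow> (\<forall>X\<in>L. \<forall>Y\<in>L. X e = Y e)"

definition simple :: "'e svec set \<Rightarrow> bool" where
  "simple L \<longleftrightarrow> (\<forall>e. \<not> redundant L e) \<and>
                 (\<forall>e f. e \<noteq> f \<longrightarrow> \<not> equivalent_elems L e f)"

definition parallel :: "'e svec set \<Rightarrow> 'e \<Rightarrow> 'e \<Rightarrow> bool" where
  "parallel L e f \<longleftrightarrow> \<not> (\<exists>X\<in>L. X e = Zero \<and> X f = Zero)"

definition par_class :: "'e svec set \<Rightarrow> 'e \<Rightarrow> 'e set" where
  "par_class L e = {f. f = e \<or> parallel L e f}"

definition between :: "'e svec set \<Rightarrow> 'e \<Rightarrow> 'e \<Rightarrow> 'e \<Rightarrow> bool" where
  "between L a b c \<longleftrightarrow> a \<noteq> b \<and> b \<noteq> c \<and> a \<noteq> c \<and>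
     (\<forall>X\<in>L. \<forall>Z\<in>L. X a = Zero \<longrightarrow> Z c = Zero \<longrightarrow> X b = sneg (Z b))"

definition strict_total_on :: "'e set \<Rightarrow> ('e \<Rightarrow> 'e \<Rightarrow> bool) \<Rightarrow> bool" where
  "strict_total_on A R \<longleftrightarrow>
     (\<forall>x\<in>A. \<not> R x x) \<and>
     (\<forall>x\<in>A. \<forall>y\<in>A. \<forall>z\<in>A. R x y \<longrightarrow> R y z \<longrightarrow> R x z) \<and>
     (\<forall>x\<in>A. \<forall>y\<in>A. x \<noteq> y \<longrightarrow> R x y \<or> R y x)"

text \<open>The order of a parallelism class: a strict total order whose betweenness is
  the relation [a,b,c] (unique up to reversal).\<close>
definition class_order :: "'e svec set \<Rightarrow> 'e set \<Rightarrow> ('e \<Rightarrow> 'e \<Rightarrow> bool) \<Rightarrow> bool" where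
  "class_order L A R \<longleftrightarrow> strict_total_on A R \<and>
     (\<forall>a\<in>A. \<forall>b\<in>A. \<forall>c\<in>A. between L a b c \<longleftrightarrow> (R a b \<and> R b c) \<or> (R c b \<and> R b a))"

definition has_min :: "'e set \<Rightarrow> ('e \<Rightarrow> 'e \<Rightarrow> bool) \<Rightarrow> bool" where
  "has_min A R \<longleftrightarrow> (\<exists>m\<in>A. \<forall>x\<in>A. x \<noteq> m \<longrightarrow> R m x)"

definition has_max :: "'e set \<Rightarrow> ('e \<Rightarrow> 'e \<Rightarrow> bool) \<Rightarrow> bool" where
  "has_max A R \<longleftrightarrow> (\<exists>m\<in>A. \<forall>x\<in>A. x \<noteq> m \<longrightarrow> R x m)"

definition order_iso :: "'e set \<Rightarrow> ('e \<Rightarrow> 'e \<Rightarrow> bool) \<Rightarrow> 'b::ord set \<Rightarrow> bool" where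
  "order_iso A R B \<longleftrightarrow> (\<exists>f. bij_betw f A B \<and> (\<forall>x\<in>A. \<forall>y\<in>A. R x y \<longleftrightarrow> f x < f y))"

end

theory Submission
  imports Defs
begin

definition fin_int :: "'a set \<Rightarrow> ('a \<Rightarrow> 'a \<Rightarrow> bool) \<Rightarrow> bool" where
  "fin_int A R \<longleftrightarrow> (\<forall>a\<in>A. \<forall>b\<in>A. finite {c\<in>A. R a c \<and> R c b})"

lemma sto_irr: "strict_total_on A R \<Longrightarrow> x\<in>A \<Longrightarrow> \<not> R x x"
  by (simp add: strict_total_on_def)
lemma sto_trn: "strict_total_on A R \<Longrightarrow> x\<in>A \<Longrightarrow> y\<in>A \<Longrightarrow> z\<in>A \<Longrightarrow> R x y \<Longrightarrow> R y z \<Longrightarrow> R x z"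
  unfolding strict_total_on_def by blast
lemma sto_tot: "strict_total_on A R \<Longrightarrow> x\<in>A \<Longrightarrow> y\<in>A \<Longrightarrow> x\<noteq>y \<Longrightarrow> R x y \<or> R y x"
  unfolding strict_total_on_def by blast
lemma sto_sub: "strict_total_on A R \<Longrightarrow> B \<subseteq> A \<Longrightarrow> strict_total_on B R"
  unfolding strict_total_on_def by blast
lemma sto_flip: "strict_total_on A R \<Longrightarrow> strict_total_on A (\<lambda>x y. R y x)"
  unfolding strict_total_on_def by blast
lemma fi_sub: assumes fi: "fin_int A R" and sub: "B \<subseteq> A" shows "fin_int B R"
  unfolding fin_int_def
proof (intro ballI)
  fix a b assume ab: "a\<in>B" "b\<in>B"
  then have "finite {c\<in>A. R a c \<and> R c b}" using fi sub unfolding fin_int_def by blast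
  moreover have "{c\<in>B. R a c \<and> R c b} \<subseteq> {c\<in>A. R a c \<and> R c b}" using sub by blast
  ultimately show "finite {c\<in>B. R a c \<and> R c b}" by (rule finite_subset[rotated])
qed
lemma fi_flip: "fin_int A R \<Longrightarrow> fin_int A (\<lambda>x y. R y x)"
  unfolding fin_int_def by (simp add: conj_commute)

lemma finite_min:
  assumes "finite T" "T \<noteq> {}" "T \<subseteq> A" "strict_total_on A R"
  shows "\<exists>y\<in>T. \<forall>c\<in>T. \<not> R c y"
  using assms
proof (induction T rule: finite_ne_induct)
  case (singleton x)
  then show ?case using sto_irr by fastforce
next
  case (insert x F)
  then obtain y where y: "y\<in>F" "\<forall>c\<in>F. \<not> R c y" by auto
  show ?case
  proof (cases "R x y")
    case True
    have xA: "x\<in>A" and FA: "F \<subseteq> A" using insert.prems by auto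
    have yA: "y\<in>A" using y FA by blast
    have "\<forall>c\<in>insert x F. \<not> R c x"
    proof
      fix c assume c: "c \<in> insert x F"
      show "\<not> R c x"
      proof (cases "c = x")
        case True then show ?thesis using sto_irr[OF insert.prems(2) xA] by simp
      next
        case False
        then have cF: "c\<in>F" "c\<in>A" using c FA by auto
        show ?thesis
        proof
          assume "R c x"
          then have "R c y" using sto_trn[OF insert.prems(2) cF(2) xA yA] True by blast
          then show False using y cF by blast
        qed
      qed
    qed
    then show ?thesis by blast
  next
    case False
    then show ?thesis using y by blast
  qed
qed

lemma imm_succ:
  assumes sto: "strict_total_on A R" and fi: "fin_int A R"
    and x: "x\<in>A" and z: "z\<in>A" "R x z"
  shows "\<exists>y\<in>A. R x y \<and> (\<forall>c\<in>A. R x c \<longrightarrow> \<not> R c y)"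
proof -
  define T where "T = insert z {c\<in>A. R x c \<and> R c z}"
  have "finite T" using fi x z unfolding T_def fin_int_def by auto
  moreover have "T \<subseteq> A" using z unfolding T_def by auto
  moreover have "T \<noteq> {}" unfolding T_def by blast
  ultimately obtain y where y: "y\<in>T" "\<forall>c\<in>T. \<not> R c y"
    using finite_min[OF _ _ _ sto] by blast
  have yA: "y\<in>A" and xy: "R x y" and yz: "R y z \<or> y = z" using y z unfolding T_def by auto
  have "\<forall>c\<in>A. R x c \<longrightarrow> \<not> R c y"
  proof (intro ballI impI)
    fix c assume c: "c\<in>A" "R x c"
    show "\<not> R c y"
    proof
      assume cy: "R c y"
      then have "R c z" using yz sto_trn[OF sto c(1) yA z(1)] by auto
      then have "c \<in> T" using c unfolding T_def by auto
      then show False using y cy by blast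
    qed
  qed
  then show ?thesis using yA xy by blast
qed

context
  fixes A :: "'a set" and R :: "'a \<Rightarrow> 'a \<Rightarrow> bool" and m :: 'a
  assumes sto: "strict_total_on A R" and fi: "fin_int A R" and mA: "m \<in> A"
    and mmin: "\<forall>x\<in>A. x \<noteq> m \<longrightarrow> R m x"
begin

lemma P_fin: "x\<in>A \<Longrightarrow> finite {c\<in>A. R c x}"
proof -
  assume x: "x\<in>A"
  have "{c\<in>A. R c x} \<subseteq> insert m {c\<in>A. R m c \<and> R c x}" using mmin by auto
  moreover have "finite {c\<in>A. R m c \<and> R c x}" using fi mA x unfolding fin_int_def by auto
  ultimately show ?thesis using finite_subset by blast
qed

lemma g_less: "x\<in>A \<Longrightarrow> y\<in>A \<Longrightarrow> R x y \<Longrightarrow> card {c\<in>A. R c x} < card {c\<in>A. R c y}"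
proof -
  assume xy: "x\<in>A" "y\<in>A" "R x y"
  have "{c\<in>A. R c x} \<subseteq> {c\<in>A. R c y}"
  proof
    fix c assume "c \<in> {c\<in>A. R c x}"
    then show "c \<in> {c\<in>A. R c y}" using sto_trn[OF sto _ xy(1,2) _ xy(3)] by blast
  qed
  moreover have "x \<in> {c\<in>A. R c y} - {c\<in>A. R c x}" using xy sto_irr[OF sto xy(1)] by blast
  ultimately have "{c\<in>A. R c x} \<subset> {c\<in>A. R c y}" by blast
  then show ?thesis using psubset_card_mono P_fin xy by blast
qed

lemma g_iff: assumes x: "x\<in>A" and y: "y\<in>A"
  shows "R x y \<longleftrightarrow> card {c\<in>A. R c x} < card {c\<in>A. R c y}"
proof
  assume "R x y" then show "card {c\<in>A. R c x} < card {c\<in>A. R c y}" using g_less x y by blast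
next
  assume lt: "card {c\<in>A. R c x} < card {c\<in>A. R c y}"
  show "R x y"
  proof (rule ccontr)
    assume "\<not> R x y"
    moreover have "x \<noteq> y" using lt by auto
    ultimately have "R y x" using sto_tot[OF sto x y] by blast
    then show False using g_less[OF y x] lt by simp
  qed
qed

lemma g_inj: "inj_on (\<lambda>x. card {c\<in>A. R c x}) A"
proof (rule inj_onI)
  fix x y assume x: "x\<in>A" and y: "y\<in>A" and eq: "card {c\<in>A. R c x} = card {c\<in>A. R c y}"
  show "x = y"
  proof (rule ccontr)
    assume "x \<noteq> y"
    then have "R x y \<or> R y x" using sto_tot[OF sto x y] by blast
    then show False using g_less[OF x y] g_less[OF y x] eq by auto
  qed
qed

lemma g_m: "card {c\<in>A. R c m} = 0"
proof -
  have "{c\<in>A. R c m} = {}"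
  proof (rule ccontr)
    assume "{c\<in>A. R c m} \<noteq> {}"
    then obtain c where c: "c\<in>A" "R c m" by blast
    show False
    proof (cases "c = m")
      case True then show False using c sto_irr[OF sto] by blast
    next
      case False then have "R m c" using mmin c by blast
      then show False using c mA sto_irr[OF sto mA] sto_trn[OF sto mA c(1) mA] by blast
    qed
  qed
  then show ?thesis by (metis card.empty)
qed

lemma g_succ:
  assumes x: "x\<in>A" and z: "z\<in>A" "R x z"
  shows "\<exists>y\<in>A. R x y \<and> card {c\<in>A. R c y} = Suc (card {c\<in>A. R c x})"
proof -
  obtain y where y: "y\<in>A" "R x y" "\<forall>c\<in>A. R x c \<longrightarrow> \<not> R c y"
    using imm_succ[OF sto fi x z] by blast
  have "{c\<in>A. R c y} = insert x {c\<in>A. R c x}"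
  proof (intro set_eqI iffI)
    fix c assume c: "c \<in> {c\<in>A. R c y}"
    then have cA: "c\<in>A" "R c y" by auto
    show "c \<in> insert x {c\<in>A. R c x}"
    proof (cases "c = x")
      case False
      then have "R c x \<or> R x c" using sto_tot[OF sto cA(1) x] by blast
      then show ?thesis using y(3) cA by blast
    qed simp
  next
    fix c assume c: "c \<in> insert x {c\<in>A. R c x}"
    then show "c \<in> {c\<in>A. R c y}"
    proof
      assume "c = x" then show ?thesis using x y by blast
    next
      assume "c \<in> {c\<in>A. R c x}"
      then show ?thesis using sto_trn[OF sto _ x y(1) _ y(2)] by blast
    qed
  qed
  moreover have "x \<notin> {c\<in>A. R c x}" using sto_irr[OF sto] by blast
  ultimately have "card {c\<in>A. R c y} = Suc (card {c\<in>A. R c x})"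
    using P_fin[OF x] by simp
  then show ?thesis using y by blast
qed

lemma nat_iso:
  assumes nomax: "\<not> has_max A R"
  shows "order_iso A R (UNIV :: nat set)"
proof -
  let ?g = "\<lambda>x. card {c\<in>A. R c x}"
  have succ: "\<forall>x\<in>A. \<exists>z\<in>A. R x z"
  proof
    fix x assume x: "x\<in>A"
    obtain z where z: "z\<in>A" "z \<noteq> x" "\<not> R z x" using nomax x unfolding has_max_def by blast
    then have "R x z" using sto_tot[OF sto x z(1)] by blast
    then show "\<exists>z\<in>A. R x z" using z by blast
  qed
  have "\<forall>n. \<exists>x\<in>A. ?g x = n"
  proof
    fix n show "\<exists>x\<in>A. ?g x = n"
    proof (induction n)
      case 0 then show ?case using g_m mA by blast
    next
      case (Suc n)
      then obtain x where "x\<in>A" "?g x = n" by blast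
      then obtain z where "z\<in>A" "R x z" using succ by blast
      then obtain y where "y\<in>A" "?g y = Suc (?g x)" using g_succ \<open>x\<in>A\<close> by blast
      then show ?case using \<open>?g x = n\<close> by blast
    qed
  qed
  then have "?g ` A = UNIV" by (simp add: set_eq_iff image_iff) (metis)
  then have "bij_betw ?g A UNIV" using g_inj by (simp add: bij_betw_def)
  moreover have "\<forall>x\<in>A. \<forall>y\<in>A. R x y \<longleftrightarrow> ?g x < ?g y" using g_iff by blast
  ultimately show ?thesis unfolding order_iso_def by blast
qed

lemma fin_iso:
  assumes hm: "has_max A R"
  shows "finite A \<and> order_iso A R {0..<card A}"
proof -
  let ?g = "\<lambda>x. card {c\<in>A. R c x}"
  obtain M where M: "M\<in>A" "\<forall>x\<in>A. x \<noteq> M \<longrightarrow> R x M" using hm unfolding has_max_def by blast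
  have "\<forall>n. n \<le> ?g M \<longrightarrow> (\<exists>x\<in>A. ?g x = n)"
  proof
    fix n show "n \<le> ?g M \<longrightarrow> (\<exists>x\<in>A. ?g x = n)"
    proof (induction n)
      case 0 then show ?case using g_m mA by blast
    next
      case (Suc n)
      show ?case
      proof
        assume "Suc n \<le> ?g M"
        then obtain x where x: "x\<in>A" "?g x = n" using Suc by auto
        then have "x \<noteq> M" using \<open>Suc n \<le> ?g M\<close> by auto
        then have "R x M" using M x by blast
        then obtain y where "y\<in>A" "?g y = Suc (?g x)" using g_succ x(1) M(1) by blast
        then show "\<exists>x\<in>A. ?g x = Suc n" using x(2) by blast
      qed
    qed
  qed
  note ex = this
  have le: "\<forall>x\<in>A. ?g x \<le> ?g M" 
  proof
    fix x assume x: "x\<in>A"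
    show "?g x \<le> ?g M"
    proof (cases "x = M")
      case False
      then have "R x M" using M x by blast
      then show ?thesis using g_less[OF x M(1)] by simp
    qed simp
  qed
  have img: "?g ` A = {0..<Suc (?g M)}"
  proof
    show "?g ` A \<subseteq> {0..<Suc (?g M)}" using le by (auto simp: less_Suc_eq_le)
    show "{0..<Suc (?g M)} \<subseteq> ?g ` A"
    proof
      fix n assume "n \<in> {0..<Suc (?g M)}"
      then have "n \<le> ?g M" by simp
      then obtain x where x: "x\<in>A" "?g x = n" using ex by blast
      show "n \<in> ?g ` A" by (rule rev_image_eqI[OF x(1)]) (simp add: x(2))
    qed
  qed
  have finA: "finite A" using finite_imageD[OF _ g_inj] img by simp
  have "card A = Suc (?g M)" using card_image[OF g_inj] img by simp
  then have "bij_betw ?g A {0..<card A}" using img g_inj by (simp add: bij_betw_def)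
  moreover have "\<forall>x\<in>A. \<forall>y\<in>A. R x y \<longleftrightarrow> ?g x < ?g y" using g_iff by blast
  ultimately show ?thesis using finA unfolding order_iso_def by blast
qed

end


lemma int_iso:
  assumes sto: "strict_total_on A R" and fi: "fin_int A R" and eA: "e\<in>A"
    and nomin: "\<not> has_min A R" and nomax: "\<not> has_max A R"
  shows "order_iso A R (UNIV :: int set)"
proof -
  define Ap where "Ap = {x\<in>A. \<not> R x e}"
  define Am where "Am = {x\<in>A. R x e}"
  let ?R' = "\<lambda>x y. R y x"
  have ApA: "Ap \<subseteq> A" and AmA: "Am \<subseteq> A" unfolding Ap_def Am_def by auto
  have eAp: "e \<in> Ap" unfolding Ap_def using eA sto_irr[OF sto eA] by blast
  have emin: "\<forall>x\<in>Ap. x \<noteq> e \<longrightarrow> R e x"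
    unfolding Ap_def using sto_tot[OF sto _ eA] by blast
  have nomaxp: "\<not> has_max Ap R"
  proof
    assume "has_max Ap R"
    then obtain M where M: "M\<in>Ap" "\<forall>x\<in>Ap. x \<noteq> M \<longrightarrow> R x M" unfolding has_max_def by blast
    have MA: "M \<in> A" using M ApA by blast
    have "\<forall>x\<in>A. x \<noteq> M \<longrightarrow> R x M"
    proof (intro ballI impI)
      fix x assume x: "x\<in>A" "x \<noteq> M"
      show "R x M"
      proof (cases "R x e")
        case False then show ?thesis using M x unfolding Ap_def by blast
      next
        case True
        show ?thesis
        proof (cases "M = e")
          case True then show ?thesis using \<open>R x e\<close> by simp
        next
          case False
          then have "R e M" using emin M by blast
          then show ?thesis using sto_trn[OF sto x(1) eA MA] \<open>R x e\<close> by blast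
        qed
      qed
    qed
    then show False using nomax MA unfolding has_max_def by blast
  qed
  have isop: "order_iso Ap R (UNIV :: nat set)"
    using nat_iso[OF sto_sub[OF sto ApA] fi_sub[OF fi ApA] eAp emin nomaxp] .
  then obtain gp where gp: "bij_betw gp Ap (UNIV :: nat set)" "\<forall>x\<in>Ap. \<forall>y\<in>Ap. R x y \<longleftrightarrow> gp x < gp y"
    unfolding order_iso_def by blast
  obtain x0 where x0: "x0\<in>A" "x0 \<noteq> e" "\<not> R e x0" using nomin eA unfolding has_min_def by blast
  then have x0e: "R x0 e" using sto_tot[OF sto x0(1) eA] by blast
  obtain y where y: "y\<in>A" "R y e" "\<forall>c\<in>A. R c e \<longrightarrow> \<not> R y c"
    using imm_succ[OF sto_flip[OF sto] fi_flip[OF fi] eA x0(1)] x0e by blast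
  have yAm: "y \<in> Am" using y unfolding Am_def by blast
  have ymin: "\<forall>x\<in>Am. x \<noteq> y \<longrightarrow> ?R' y x"
    using y sto_tot[OF sto _ y(1)] unfolding Am_def by blast
  have nomaxm: "\<not> has_max Am ?R'"
  proof
    assume "has_max Am ?R'"
    then obtain m where m: "m\<in>Am" "\<forall>x\<in>Am. x \<noteq> m \<longrightarrow> R m x" unfolding has_max_def by blast
    have mA: "m\<in>A" and me: "R m e" using m unfolding Am_def by auto
    have "\<forall>x\<in>A. x \<noteq> m \<longrightarrow> R m x"
    proof (intro ballI impI)
      fix x assume x: "x\<in>A" "x \<noteq> m"
      show "R m x"
      proof (cases "R x e")
        case True then show ?thesis using m x unfolding Am_def by blast
      next
        case False
        show ?thesis
        proof (cases "x = e")
          case True then show ?thesis using me by simp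
        next
          case False
          then have "R e x" using sto_tot[OF sto x(1) eA] \<open>\<not> R x e\<close> by blast
          then show ?thesis using sto_trn[OF sto mA eA x(1)] me by blast
        qed
      qed
    qed
    then show False using nomin mA unfolding has_min_def by blast
  qed
  have isom: "order_iso Am ?R' (UNIV :: nat set)"
    using nat_iso[OF sto_sub[OF sto_flip[OF sto] AmA] fi_sub[OF fi_flip[OF fi] AmA] yAm ymin nomaxm] .
  then obtain gm where gm: "bij_betw gm Am (UNIV :: nat set)" "\<forall>x\<in>Am. \<forall>y\<in>Am. R y x \<longleftrightarrow> gm x < gm y"
    unfolding order_iso_def by blast
  define f where "f = (\<lambda>x. if R x e then - int (gm x) - 1 else int (gp x))"
  have fp: "x \<in> A \<Longrightarrow> \<not> R x e \<Longrightarrow> x \<in> Ap \<and> f x = int (gp x)" for x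
    unfolding f_def Ap_def by simp
  have fm: "x \<in> A \<Longrightarrow> R x e \<Longrightarrow> x \<in> Am \<and> f x = - int (gm x) - 1" for x
    unfolding f_def Am_def by simp
  have ord: "\<forall>x\<in>A. \<forall>y\<in>A. R x y \<longleftrightarrow> f x < f y"
  proof (intro ballI)
    fix x y assume x: "x\<in>A" and y: "y\<in>A"
    show "R x y \<longleftrightarrow> f x < f y"
    proof (cases "R x e")
      case xe: True
      show ?thesis
      proof (cases "R y e")
        case True
        then show ?thesis using fm[OF x xe] fm[OF y True] gm(2) by auto
      next
        case False
        have "R x y"
        proof (cases "y = e")
          case True then show ?thesis using xe by simp
        next
          case False
          then have "R e y" using sto_tot[OF sto y eA] \<open>\<not> R y e\<close> by blast
          then show ?thesis using sto_trn[OF sto x eA y] xe by blast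
        qed
        then show ?thesis using fm[OF x xe] fp[OF y False] by simp
      qed
    next
      case xe: False
      show ?thesis
      proof (cases "R y e")
        case True
        have "\<not> R x y" using sto_trn[OF sto x y eA] True xe by blast
        then show ?thesis using fp[OF x xe] fm[OF y True] by simp
      next
        case False
        then show ?thesis using fp[OF x xe] fp[OF y False] gp(2) by auto
      qed
    qed
  qed
  have inj: "inj_on f A"
  proof (rule inj_onI)
    fix x y assume x: "x\<in>A" and y: "y\<in>A" and eq: "f x = f y"
    show "x = y"
    proof (rule ccontr)
      assume "x \<noteq> y"
      then have "R x y \<or> R y x" using sto_tot[OF sto x y] by blast
      then show False using ord x y eq by auto
    qed
  qed
  have surj: "f ` A = UNIV"
  proof (rule set_eqI, rule iffI)
    fix k :: int assume "k \<in> UNIV"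
    show "k \<in> f ` A"
    proof (cases "k \<ge> 0")
      case True
      obtain x where x: "x\<in>Ap" "gp x = nat k" using gp(1) unfolding bij_betw_def by (metis UNIV_I imageE)
      have "x\<in>A" "\<not> R x e" using x unfolding Ap_def by auto
      then have "f x = k" using fp x True by simp
      then show ?thesis using \<open>x\<in>A\<close> by (metis imageI)
    next
      case False
      obtain x where x: "x\<in>Am" "gm x = nat (- k - 1)" using gm(1) unfolding bij_betw_def by (metis UNIV_I imageE)
      have "x\<in>A" "R x e" using x unfolding Am_def by auto
      then have "f x = k" using fm x False by simp
      then show ?thesis using \<open>x\<in>A\<close> by (metis imageI)
    qed
  qed simp
  have "bij_betw f A UNIV" using inj surj by (simp add: bij_betw_def)
  then show ?thesis using ord unfolding order_iso_def by blast
qed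

lemma flip_min: "has_min A (\<lambda>x y. R y x) = has_max A R"
  unfolding has_min_def has_max_def by simp
lemma flip_max: "has_max A (\<lambda>x y. R y x) = has_min A R"
  unfolding has_min_def has_max_def by simp

lemma gen:
  assumes sto: "strict_total_on A R" and fi: "fin_int A R" and eA: "e\<in>A"
  shows "(\<not> has_min A R \<and> \<not> has_max A R \<longrightarrow>
            order_iso A R (UNIV :: int set) \<or>
            order_iso A (\<lambda>x y. R y x) (UNIV :: int set))
       \<and> (has_min A R \<and> \<not> has_max A R \<longrightarrow>
            order_iso A R (UNIV :: nat set))
       \<and> (\<not> has_min A R \<and> has_max A R \<longrightarrow>
            order_iso A (\<lambda>x y. R y x) (UNIV :: nat set))
       \<and> (has_min A R \<and> has_max A R \<longrightarrow>
            finite A \<and>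
            (order_iso A R {0..<card A} \<or>
             order_iso A (\<lambda>x y. R y x) {0..<card A}))"
proof (intro conjI impI)
  assume "\<not> has_min A R \<and> \<not> has_max A R"
  then show "order_iso A R (UNIV :: int set) \<or> order_iso A (\<lambda>x y. R y x) (UNIV :: int set)"
    using int_iso[OF sto fi eA] by blast
next
  assume h: "has_min A R \<and> \<not> has_max A R"
  then obtain m where "m\<in>A" "\<forall>x\<in>A. x \<noteq> m \<longrightarrow> R m x" unfolding has_min_def by blast
  then show "order_iso A R (UNIV :: nat set)" using nat_iso[OF sto fi] h by blast
next
  assume h: "\<not> has_min A R \<and> has_max A R"
  then obtain m where "m\<in>A" "\<forall>x\<in>A. x \<noteq> m \<longrightarrow> R x m" unfolding has_max_def by blast
  then show "order_iso A (\<lambda>x y. R y x) (UNIV :: nat set)"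
    using nat_iso[OF sto_flip[OF sto] fi_flip[OF fi]] h flip_max[of A R] by blast
next
  assume h: "has_min A R \<and> has_max A R"
  then obtain m where "m\<in>A" "\<forall>x\<in>A. x \<noteq> m \<longrightarrow> R m x" unfolding has_min_def by blast
  then show "finite A" using fin_iso[OF sto fi] h by blast
next
  assume h: "has_min A R \<and> has_max A R"
  then obtain m where "m\<in>A" "\<forall>x\<in>A. x \<noteq> m \<longrightarrow> R m x" unfolding has_min_def by blast
  then show "order_iso A R {0..<card A} \<or> order_iso A (\<lambda>x y. R y x) {0..<card A}"
    using fin_iso[OF sto fi] h by blast
qed


lemma zero_ex:
  assumes aom: "AOM L" and nr: "\<not> redundant L a"
  shows "\<exists>X\<in>L. X a = Zero"
proof -
  obtain X Y where XY: "X\<in>L" "Y\<in>L" "X a \<noteq> Y a" using nr unfolding redundant_def by blast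
  show ?thesis
  proof (cases "X a = Zero \<or> Y a = Zero")
    case True then show ?thesis using XY by blast
  next
    case False
    then have "a \<in> sep X Y" using XY unfolding sep_def by blast
    then have "I_e X Y L a \<noteq> {}" using aom XY unfolding AOM_def by blast
    then show ?thesis unfolding I_e_def by blast
  qed
qed

lemma sep_mem: "W c \<noteq> Zero \<Longrightarrow> W c = sneg (Z c) \<Longrightarrow> c \<in> sep W Z"
  unfolding sep_def by (cases "Z c") auto

theorem lemma3p13:
  fixes L :: "'e svec set" and e :: 'e and R :: "'e \<Rightarrow> 'e \<Rightarrow> bool"
  assumes "AOM L" and "simple L"
    and "\<forall>X\<in>L. \<forall>Y\<in>L. finite (sep X Y)"
    and "class_order L (par_class L e) R"
  shows "(\<not> has_min (par_class L e) R \<and> \<not> has_max (par_class L e) R \<longrightarrow>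
            order_iso (par_class L e) R (UNIV :: int set) \<or>
            order_iso (par_class L e) (\<lambda>x y. R y x) (UNIV :: int set))
       \<and> (has_min (par_class L e) R \<and> \<not> has_max (par_class L e) R \<longrightarrow>
            order_iso (par_class L e) R (UNIV :: nat set))
       \<and> (\<not> has_min (par_class L e) R \<and> has_max (par_class L e) R \<longrightarrow>
            order_iso (par_class L e) (\<lambda>x y. R y x) (UNIV :: nat set))
       \<and> (has_min (par_class L e) R \<and> has_max (par_class L e) R \<longrightarrow>
            finite (par_class L e) \<and>
            (order_iso (par_class L e) R {0..<card (par_class L e)} \<or>
             order_iso (par_class L e) (\<lambda>x y. R y x) {0..<card (par_class L e)}))"
proof -
  let ?A = "par_class L e"
  have sto: "strict_total_on ?A R" using assms(4) unfolding class_order_def by blast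
  have btw: "\<And>a b c. a\<in>?A \<Longrightarrow> b\<in>?A \<Longrightarrow> c\<in>?A \<Longrightarrow>
      between L a b c \<longleftrightarrow> (R a b \<and> R b c) \<or> (R c b \<and> R b a)"
    using assms(4) unfolding class_order_def by blast
  have eA: "e \<in> ?A" unfolding par_class_def by blast
  obtain W where W: "W\<in>L" "W e = Zero"
    using zero_ex[OF assms(1)] assms(2) unfolding simple_def by blast
  have Sfin: "finite {c\<in>?A. between L e c b}" if bA: "b\<in>?A" for b
  proof -
    obtain Z where Z: "Z\<in>L" "Z b = Zero"
      using zero_ex[OF assms(1)] assms(2) unfolding simple_def by blast
    have "{c\<in>?A. between L e c b} \<subseteq> sep W Z"
    proof
      fix c assume c: "c \<in> {c\<in>?A. between L e c b}"
      then have ce: "c \<noteq> e" and cb: "between L e c b" unfolding between_def by auto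
      then have "parallel L e c" using c unfolding par_class_def by auto
      then have "W c \<noteq> Zero" using W unfolding parallel_def by blast
      moreover have "W c = sneg (Z c)" using cb W Z unfolding between_def by blast
      ultimately show "c \<in> sep W Z" by (rule sep_mem)
    qed
    moreover have "finite (sep W Z)" using assms(3) W Z by blast
    ultimately show ?thesis by (rule finite_subset)
  qed
  have fi: "fin_int ?A R"
    unfolding fin_int_def
  proof (intro ballI)
    fix a b assume a: "a\<in>?A" and b: "b\<in>?A"
    have "{c\<in>?A. R a c \<and> R c b} \<subseteq> insert e ({c\<in>?A. between L e c a} \<union> {c\<in>?A. between L e c b})"
    proof
      fix c assume c: "c \<in> {c\<in>?A. R a c \<and> R c b}"
      then have cA: "c\<in>?A" and ac: "R a c" and cb: "R c b" by auto
      show "c \<in> insert e ({c\<in>?A. between L e c a} \<union> {c\<in>?A. between L e c b})"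
      proof (cases "c = e")
        case False
        then have "R e c \<or> R c e" using sto_tot[OF sto cA eA] by blast
        then show ?thesis
        proof
          assume "R e c"
          then have "between L e c b" using btw[OF eA cA b] cb by blast
          then show ?thesis using cA by blast
        next
          assume "R c e"
          then have "between L e c a" using btw[OF eA cA a] ac by blast
          then show ?thesis using cA by blast
        qed
      qed simp
    qed
    moreover have "finite (insert e ({c\<in>?A. between L e c a} \<union> {c\<in>?A. between L e c b}))"
      using Sfin[OF a] Sfin[OF b] by blast
    ultimately show "finite {c\<in>?A. R a c \<and> R c b}" by (rule finite_subset)
  qed
  show ?thesis using gen[OF sto fi eA] .
qed

end
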